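(* Consider the two-parameter model below in the spin-$1/2$ (qubit) representation, $J_k=\sigma_k/2$, with arbitrary pure initial state $|\psi_0\rangle$ with Bloch vector $\mathbf r_0$ ($|\mathbf r_0|=1$). Then $\det\boldsymbol{\mathcal Q}=\det\boldsymbol{\mathcal D}=4t^2\sin^2\tfrac{Bt}{2}\,(\mathbf n_2\cdot\mathbf r_0)^2$. In particular, the Uhlmann matrix vanishes exactly when the QFIM is singular (for $t\sin\frac{Bt}{2}\ne0$), and whenever the QFIM is invertible the asymptotic incompatibility equals $\mathcal R=1$, for all values of $B,\theta,t$ and every pure initial state.
   Context: Fix $t\in\mathbb R$, let $H=B(\cos\theta J_x+\sin\theta J_z)$, $U=e^{-itH}$, $|\psi_{B,\theta}\rangle=U|\psi_0\rangle$. Let $\mathbf n_\theta=(\cos\theta,0,\sin\theta)$, $\mathbf n_1=(\cos\frac{Bt}{2}\sin\theta,-\sin\frac{Bt}{2},-\cos\frac{Bt}{2}\cos\theta)$, $\mathbf n_2=\mathbf n_\theta\times\mathbf n_1$. The Bloch vector is $\mathbf r_0=(\langle\sigma_x\rangle_0,\langle\sigma_y\rangle_0,\langle\sigma_z\rangle_0)$, $\langle X\rangle_0=\langle\psi_0|X|\psi_0\rangle$. With $\mathcal H_l=i(\partial_lU^\dagger)U$, $l\in\{B,\theta\}$, the QFIM is $\mathcal Q_{ll'}=2\langle\{\mathcal H_l,\mathcal H_{l'}\}\rangle_0-4\langle\mathcal H_l\rangle_0\langle\mathcal H_{l'}\rangle_0$, the Uhlmann matrix is $\mathcal D_{ll'}=-2i\langle[\mathcal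 H_l,\mathcal H_{l'}]\rangle_0$, and the AI is $\mathcal R=\max\{|\mu|:\mu\text{ eigenvalue of }\boldsymbol{\mathcal Q}^{-1}\boldsymbol{\mathcal D}\}$ (defined when $\boldsymbol{\mathcal Q}$ is invertible). *)

theory Defs
  imports "HOL-Analysis.Analysis"
begin

type_synonym cmat = "complex^2^2"
type_synonym cvec = "complex^2"

definition mat2 :: "complex \<Rightarrow> complex \<Rightarrow> complex \<Rightarrow> complex \<Rightarrow> cmat" where
  "mat2 a b c d = (\<chi> i j. if i = 1 then (if j = 1 then a else b) else (if j = 1 then c else d))"

definition sigma_x :: cmat where "sigma_x = mat2 0 1 1 0"
definition sigma_y :: cmat where "sigma_y = mat2 0 (-\<i>) \<i> 0"
definition sigma_z :: cmat where "sigma_z = mat2 1 0 0 (-1)"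

definition cscale :: "complex \<Rightarrow> cmat \<Rightarrow> cmat" where
  "cscale c A = (\<chi> i j. c * A$i$j)"

definition adj :: "cmat \<Rightarrow> cmat" where
  "adj A = (\<chi> i j. cnj (A$j$i))"

primrec mpow :: "cmat \<Rightarrow> nat \<Rightarrow> cmat" where
  "mpow A 0 = mat 1"
| "mpow A (Suc n) = A ** mpow A n"

definition mexp :: "cmat \<Rightarrow> cmat" where
  "mexp A = (\<Sum>n. (1 / fact n) *\<^sub>R mpow A n)"

definition Jx :: cmat where "Jx = cscale (1/2) sigma_x"
definition Jy :: cmat where "Jy = cscale (1/2) sigma_y"
definition Jz :: cmat where "Jz = cscale (1/2) sigma_z"

definition Ham :: "real \<Rightarrow> real \<Rightarrow> cmat" where
  "Ham B \<theta> = cscale (complex_of_real B)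
      (cscale (complex_of_real (cos \<theta>)) Jx + cscale (complex_of_real (sin \<theta>)) Jz)"

definition Uop :: "real \<Rightarrow> real \<Rightarrow> real \<Rightarrow> cmat" where
  "Uop t B \<theta> = mexp (cscale (- \<i> * complex_of_real t) (Ham B \<theta>))"

definition gen :: "real \<Rightarrow> real \<Rightarrow> real \<Rightarrow> 2 \<Rightarrow> cmat" where
  "gen t B \<theta> l =
     (if l = 1
      then cscale \<i> (vector_derivative (\<lambda>b. adj (Uop t b \<theta>)) (at B)) ** Uop t B \<theta>
      else cscale \<i> (vector_derivative (\<lambda>th. adj (Uop t B th)) (at \<theta>)) ** Uop t B \<theta>)"

definition expect :: "cvec \<Rightarrow> cmat \<Rightarrow> complex" where
  "expect \<psi> X = (\<Sum>i\<in>UNIV. cnj (\<psi>$i) * (X *v \<psi>)$i)"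

definition is_pure_state :: "cvec \<Rightarrow> bool" where
  "is_pure_state \<psi> \<longleftrightarrow> (\<Sum>i\<in>UNIV. (cmod (\<psi>$i))\<^sup>2) = 1"

definition bloch :: "cvec \<Rightarrow> real^3" where
  "bloch \<psi> = vector [Re (expect \<psi> sigma_x), Re (expect \<psi> sigma_y), Re (expect \<psi> sigma_z)]"

definition QFIM :: "real \<Rightarrow> real \<Rightarrow> real \<Rightarrow> cvec \<Rightarrow> cmat" where
  "QFIM t B \<theta> \<psi> = (\<chi> l l'.
     2 * expect \<psi> (gen t B \<theta> l ** gen t B \<theta> l' + gen t B \<theta> l' ** gen t B \<theta> l)
     - 4 * expect \<psi> (gen t B \<theta> l) * expect \<psi> (gen t B \<theta> l'))"

definition Uhlmann :: "real \<Rightarrow> real \<Rightarrow> real \<Rightarrow> cvec \<Rightarrow> cmat" where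
  "Uhlmann t B \<theta> \<psi> = (\<chi> l l'.
     - 2 * \<i> * expect \<psi> (gen t B \<theta> l ** gen t B \<theta> l' - gen t B \<theta> l' ** gen t B \<theta> l))"

definition AI :: "real \<Rightarrow> real \<Rightarrow> real \<Rightarrow> cvec \<Rightarrow> real" where
  "AI t B \<theta> \<psi> = Max {cmod \<mu> | \<mu>.
     det (matrix_inv (QFIM t B \<theta> \<psi>) ** Uhlmann t B \<theta> \<psi> - cscale \<mu> (mat 1)) = 0}"

definition n_theta :: "real \<Rightarrow> real^3" where
  "n_theta \<theta> = vector [cos \<theta>, 0, sin \<theta>]"

definition n_1 :: "real \<Rightarrow> real \<Rightarrow> real \<Rightarrow> real^3" where
  "n_1 t B \<theta> = vector [cos (B*t/2) * sin \<theta>, - sin (B*t/2), - cos (B*t/2) * cos \<theta>]"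

definition n_2 :: "real \<Rightarrow> real \<Rightarrow> real \<Rightarrow> real^3" where
  "n_2 t B \<theta> = cross3 (n_theta \<theta>) (n_1 t B \<theta>)"

end

theory Submission
  imports Defs
begin

lemma mat2_nth [simp]:
  "mat2 a b c d $ 1 $ 1 = a" "mat2 a b c d $ 1 $ 2 = b"
  "mat2 a b c d $ 2 $ 1 = c" "mat2 a b c d $ 2 $ 2 = d"
  by (simp_all add: mat2_def)

lemma cmat_eq: "(A::cmat) = B \<longleftrightarrow> A$1$1 = B$1$1 \<and> A$1$2 = B$1$2 \<and> A$2$1 = B$2$1 \<and> A$2$2 = B$2$2"
  by (auto simp: vec_eq_iff forall_2)

lemma cmat_mat2: "(A::cmat) = mat2 (A$1$1) (A$1$2) (A$2$1) (A$2$2)"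
  by (simp add: cmat_eq)

lemma mat2_eq_iff [simp]: "mat2 a b c d = mat2 a' b' c' d' \<longleftrightarrow> a = a' \<and> b = b' \<and> c = c' \<and> d = d'"
  by (simp add: cmat_eq)

lemma mat2_add [simp]: "mat2 a b c d + mat2 a' b' c' d' = mat2 (a+a') (b+b') (c+c') (d+d')"
  by (simp add: cmat_eq)
lemma mat2_diff [simp]: "mat2 a b c d - mat2 a' b' c' d' = mat2 (a-a') (b-b') (c-c') (d-d')"
  by (simp add: cmat_eq)
lemma mat2_uminus [simp]: "- mat2 a b c d = mat2 (-a) (-b) (-c) (-d)"
  by (simp add: cmat_eq)
lemma mat2_scaleR [simp]: "r *\<^sub>R mat2 a b c d = mat2 (of_real r * a) (of_real r * b) (of_real r * c) (of_real r * d)"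
  by (simp add: cmat_eq scaleR_conv_of_real[where 'a=complex])
lemma mat2_cscale [simp]: "cscale r (mat2 a b c d) = mat2 (r* a) (r* b) (r* c) (r* d)"
  by (simp add: cmat_eq cscale_def)
lemma mat2_mult [simp]: "mat2 a b c d ** mat2 a' b' c' d' = mat2 (a*a'+b*c') (a*b'+b*d') (c*a'+d*c') (c*b'+d*d')"
  by (simp add: cmat_eq matrix_matrix_mult_def sum_2)
lemma mat2_adj [simp]: "adj (mat2 a b c d) = mat2 (cnj a) (cnj c) (cnj b) (cnj d)"
  by (simp add: cmat_eq adj_def)
lemma mat1_mat2: "(mat 1 :: cmat) = mat2 1 0 0 1"
  by (simp add: cmat_eq mat_def)
lemma mat0_mat2: "(0 :: cmat) = mat2 0 0 0 0"
  by (simp add: cmat_eq)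
lemma expect_mat2: "expect \<psi> (mat2 a b c d) = cnj (\<psi>$1) * (a*\<psi>$1 + b*\<psi>$2) + cnj (\<psi>$2) * (c*\<psi>$1 + d*\<psi>$2)"
  by (simp add: expect_def sum_2 matrix_vector_mult_def)
lemma det_mat2: "det (mat2 a b c d) = a*d - b*c"
  by (simp add: det_2)


lemma mpow_rot:
  fixes N :: cmat
  assumes NN: "N ** N = - mat 1"
  shows "mpow (a *\<^sub>R N) n = Re ((\<i>*a)^n) *\<^sub>R mat 1 + Im ((\<i>*a)^n) *\<^sub>R N"
proof (induction n)
  case 0 then show ?case by simp
next
  case (Suc n)
  define w where "w = (\<i>*complex_of_real a)^n"
  have "mpow (a *\<^sub>R N) (Suc n) = (a *\<^sub>R N) ** (Re w *\<^sub>R mat 1 + Im w *\<^sub>R N)"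
    using Suc by (simp add: w_def)
  also have "\<dots> = (a * Re w) *\<^sub>R N + (a * Im w) *\<^sub>R (N ** N)"
    by (simp add: matrix_add_ldistrib matrix_scalar_ac scalar_matrix_assoc[symmetric] mult.commute)
  also have "\<dots> = Re ((\<i>*a) * w) *\<^sub>R mat 1 + Im ((\<i>*a)*w) *\<^sub>R N"
    by (simp add: NN algebra_simps)
  finally show ?case by (simp add: w_def)
qed

lemma mexp_rot:
  fixes N :: cmat
  assumes NN: "N ** N = - mat 1"
  shows "mexp (a *\<^sub>R N) = cos a *\<^sub>R mat 1 + sin a *\<^sub>R N"
proof -
  define L where "L = (\<lambda>z::complex. Re z *\<^sub>R (mat 1::cmat) + Im z *\<^sub>R N)"
  have bl: "bounded_linear L"
    unfolding L_def
    by (intro bounded_linear_add bounded_linear_compose[OF bounded_linear_scaleR_left bounded_linear_Re]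
        bounded_linear_compose[OF bounded_linear_scaleR_left bounded_linear_Im])
  have "(\<lambda>n. L ((\<i>*a)^n /\<^sub>R fact n)) sums L (exp (\<i>*a))"
    by (rule bounded_linear.sums[OF bl exp_converges])
  moreover have "(\<lambda>n. L ((\<i>*a)^n /\<^sub>R fact n)) = (\<lambda>n. (1 / fact n) *\<^sub>R mpow (a *\<^sub>R N) n)"
    by (rule ext) (simp add: L_def mpow_rot[OF NN] scaleR_add_right divide_inverse_commute)
  ultimately have "(\<lambda>n. (1 / fact n) *\<^sub>R mpow (a *\<^sub>R N) n) sums L (exp (\<i>*a))" by simp
  then have "mexp (a *\<^sub>R N) = L (exp (\<i>*a))" unfolding mexp_def by (rule sums_unique[symmetric])
  also have "\<dots> = cos a *\<^sub>R mat 1 + sin a *\<^sub>R N"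
    by (simp add: L_def Re_exp Im_exp)
  finally show ?thesis .
qed


definition Nm :: "real \<Rightarrow> cmat" where
  "Nm th = mat2 (-\<i> * sin th) (-\<i> * cos th) (-\<i> * cos th) (\<i> * sin th)"

lemma Nm_sq: "Nm th ** Nm th = - mat 1"
proof -
  have "(sin th)\<^sup>2 + (cos th)\<^sup>2 = 1" by simp
  then have "complex_of_real (sin th)^2 + complex_of_real (cos th)^2 = 1"
    by (metis of_real_add of_real_power of_real_1)
  then show ?thesis
    by (simp add: Nm_def mat1_mat2 algebra_simps power2_eq_square)
qed

lemma A_eq: "cscale (- \<i> * complex_of_real t) (Ham B th) = (B*t/2) *\<^sub>R Nm th"
  by (simp add: Ham_def Jx_def Jz_def sigma_x_def sigma_z_def Nm_def algebra_simps)

lemma Uop_eq: "Uop t B th = cos (B*t/2) *\<^sub>R mat 1 + sin (B*t/2) *\<^sub>R Nm th"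
  unfolding Uop_def A_eq by (rule mexp_rot[OF Nm_sq])

definition Xm :: cmat where "Xm = mat2 0 \<i> \<i> 0"
definition Zm :: cmat where "Zm = mat2 \<i> 0 0 (-\<i>)"

lemma adjU: "adj (Uop t b th) = cos (b*t/2) *\<^sub>R mat 1 + (sin (b*t/2) * cos th) *\<^sub>R Xm + (sin (b*t/2) * sin th) *\<^sub>R Zm"
  by (simp add: Uop_eq Nm_def mat1_mat2 Xm_def Zm_def algebra_simps)

lemma derB: "((\<lambda>b. adj (Uop t b th)) has_vector_derivative
   ((- sin (B*t/2) * (t/2)) *\<^sub>R mat 1 + (cos (B*t/2) * (t/2) * cos th) *\<^sub>R Xm + (cos (B*t/2) * (t/2) * sin th) *\<^sub>R Zm)) (at B)"
  unfolding adjU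
  by (auto intro!: derivative_eq_intros simp: algebra_simps)

lemma derT: "((\<lambda>th. adj (Uop t B th)) has_vector_derivative
   ((sin (B*t/2) * (- sin th)) *\<^sub>R Xm + (sin (B*t/2) * cos th) *\<^sub>R Zm)) (at th)"
  unfolding adjU
  by (auto intro!: derivative_eq_intros simp: algebra_simps)


definition Pm :: "real^3 \<Rightarrow> cmat" where
  "Pm h = mat2 (of_real (h$3)) (of_real (h$1) - \<i> * of_real (h$2)) (of_real (h$1) + \<i> * of_real (h$2)) (- of_real (h$3))"

definition hB :: "real \<Rightarrow> real \<Rightarrow> real^3" where
  "hB t th = vector [-(t/2)*cos th, 0, -(t/2)* sin th]"
definition hT :: "real \<Rightarrow> real \<Rightarrow> real \<Rightarrow> real^3" where
  "hT t B th = vector [sin (B*t/2) * cos (B*t/2) * sin th, - ((sin (B*t/2))\<^sup>2), - sin (B*t/2) * cos (B*t/2) * cos th]"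

lemma trig_c: "complex_of_real (sin x)^2 + complex_of_real (cos x)^2 = 1"
  by (metis of_real_add of_real_power of_real_1 sin_cos_squared_add)

lemma g1: fixes c s C S t :: real assumes cs: "c^2 + s^2 = 1" and CS: "C^2 + S^2 = 1"
  shows "cscale \<i> ((- s * (t / 2)) *\<^sub>R mat 1 + (c * (t / 2) * C) *\<^sub>R Xm + (c * (t / 2) * S) *\<^sub>R Zm) **
     (c *\<^sub>R mat 1 + s *\<^sub>R  mat2 (-\<i> * S) (-\<i> * C) (-\<i> * C) (\<i> * S)) = Pm (vector [-(t/2)*C, 0, -(t/2)*S])"
  apply (simp add: mat1_mat2 Xm_def Zm_def Pm_def)
  apply (simp_all add: complex_eq_iff)
  apply (simp_all add: algebra_simps)
  apply (intro conjI)
  using cs CS by algebra+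

lemma g2: fixes c s C S t :: real assumes cs: "c^2 + s^2 = 1" and CS: "C^2 + S^2 = 1"
  shows "cscale \<i> ((s * - S) *\<^sub>R Xm + (s * C) *\<^sub>R Zm) **
     (c *\<^sub>R mat 1 + s *\<^sub>R  mat2 (-\<i> * S) (-\<i> * C) (-\<i> * C) (\<i> * S)) = Pm (vector [s * c * S, - (s\<^sup>2), - s * c * C])"
  apply (simp add: mat1_mat2 Xm_def Zm_def Pm_def)
  apply (simp_all add: complex_eq_iff)
  apply (simp_all add: algebra_simps)
  apply (intro conjI)
  using cs CS by algebra+

lemma gen1: "gen t B th 1 = Pm (hB t th)"
proof -
  have "gen t B th 1 = cscale \<i> ((- sin (B*t/2) * (t/2)) *\<^sub>R mat 1 + (cos (B*t/2) * (t/2) * cos th) *\<^sub>R Xm + (cos (B*t/2) * (t/2) * sin th) *\<^sub>R Zm) ** Uop t B th"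
    by (simp add: gen_def vector_derivative_at[OF derB])
  also have "\<dots> = Pm (hB t th)"
    unfolding Uop_eq Nm_def hB_def
    by (rule g1) (simp_all add: add.commute)
  finally show ?thesis .
qed

lemma gen2: "gen t B th 2 = Pm (hT t B th)"
proof -
  have "gen t B th 2 = cscale \<i> ((sin (B*t/2) * (- sin th)) *\<^sub>R Xm + (sin (B*t/2) * cos th) *\<^sub>R Zm) ** Uop t B th"
    by (simp add: gen_def vector_derivative_at[OF derT])
  also have "\<dots> = Pm (hT t B th)"
    unfolding Uop_eq Nm_def hT_def
    by (rule g2) (simp_all add: add.commute)
  finally show ?thesis .
qed

lemma expect_Pm: "expect \<psi> (Pm h) = of_real (h \<bullet> bloch \<psi>)"
  by (simp add: Pm_def expect_mat2 bloch_def sigma_x_def sigma_y_def sigma_z_def inner_vec_def sum_3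
     complex_eq_iff algebra_simps)

lemma Pm_anti: "Pm h ** Pm k + Pm k ** Pm h = (2 * (h \<bullet> k)) *\<^sub>R mat 1"
  by (simp add: Pm_def mat1_mat2 inner_vec_def sum_3 complex_eq_iff algebra_simps)

lemma Pm_comm: "Pm h ** Pm k - Pm k ** Pm h = cscale (2*\<i>) (Pm (cross3 h k))"
  by (simp add: Pm_def cross3_def complex_eq_iff algebra_simps)

lemma expect_scaleR: "expect \<psi> (r *\<^sub>R M) = of_real r * expect \<psi> M"
  by (simp add: expect_def matrix_vector_mult_def sum_distrib_left scaleR_conv_of_real[where 'a=complex] algebra_simps)

lemma expect_cscale: "expect \<psi> (cscale r M) = r * expect \<psi> M"
  by (simp add: expect_def matrix_vector_mult_def cscale_def sum_distrib_left algebra_simps)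

lemma expect_one: "is_pure_state \<psi> \<Longrightarrow> expect \<psi> (mat 1) = 1"
proof -
  assume "is_pure_state \<psi>"
  then have h: "(Re (\<psi>$1))^2 + (Im (\<psi>$1))^2 + (Re (\<psi>$2))^2 + (Im (\<psi>$2))^2 = 1"
    unfolding is_pure_state_def by (simp add: sum_2 cmod_power2)
  then show ?thesis
    by (simp add: mat1_mat2 expect_mat2 complex_eq_iff algebra_simps power2_eq_square)
qed

lemma bloch_norm: "is_pure_state \<psi> \<Longrightarrow> bloch \<psi> \<bullet> bloch \<psi> = 1"
proof -
  assume "is_pure_state \<psi>"
  then have h: "(Re (\<psi>$1))^2 + (Im (\<psi>$1))^2 + (Re (\<psi>$2))^2 + (Im (\<psi>$2))^2 = 1"
    unfolding is_pure_state_def by (simp add: sum_2 cmod_power2)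
  have "bloch \<psi> \<bullet> bloch \<psi> = ((Re (\<psi>$1))^2 + (Im (\<psi>$1))^2 + (Re (\<psi>$2))^2 + (Im (\<psi>$2))^2)^2"
    by (simp add: bloch_def expect_mat2 sigma_x_def sigma_y_def sigma_z_def inner_vec_def sum_3 algebra_simps power2_eq_square)
  then show ?thesis using h by simp
qed


lemma gram3:
  fixes h k r :: "real^3"
  assumes "r \<bullet> r = 1"
  shows "(h\<bullet>h - (h\<bullet>r)^2) * (k\<bullet>k - (k\<bullet>r)^2) - (h\<bullet>k - (h\<bullet>r)*(k\<bullet>r))^2 = (cross3 h k \<bullet> r)^2"
proof -
  have e: "r$1*r$1 + r$2*r$2 + r$3*r$3 = 1" using assms by (simp add: inner_vec_def sum_3)
  show ?thesis
    unfolding inner_vec_def sum_3 cross3_def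
    using e by simp algebra
qed

lemma AI_lemma:
  fixes q11 q12 q22 d :: real
  assumes Qe: "Q = mat2 (of_real q11) (of_real q12) (of_real q12) (of_real q22)"
    and De: "D = mat2 0 (of_real d) (of_real (-d)) 0"
    and dd: "q11*q22 - q12^2 = d^2"
    and inv: "invertible Q"
  shows "Max {cmod \<mu> | \<mu>. det (matrix_inv Q ** D - cscale \<mu> (mat 1)) = 0} = 1"
proof -
  have dQ: "det Q = of_real (q11*q22 - q12^2)" by (simp add: Qe det_mat2 power2_eq_square)
  have nz: "q11*q22 - q12^2 \<noteq> 0" using inv dQ invertible_det_nz by force
  define \<Delta> where "\<Delta> = q11*q22 - q12^2"
  define K where "K = mat2 (of_real (q22/\<Delta>)) (of_real (-q12/\<Delta>)) (of_real (-q12/\<Delta>)) (of_real (q11/\<Delta>))"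
  have dl: "q11*q22 - q12*q12 = \<Delta>" by (simp add: \<Delta>_def power2_eq_square)
  have dl2: "d*d = \<Delta>" using dd by (simp add: \<Delta>_def power2_eq_square)
  have nz': "\<Delta> \<noteq> 0" using nz by (simp add: \<Delta>_def)
  have QK: "Q ** K = mat 1"
    using nz' dl unfolding Qe K_def mat1_mat2
    by (simp add: field_simps flip: of_real_mult of_real_add of_real_diff of_real_minus of_real_divide)
  have "Q ** matrix_inv Q = mat 1 \<and> matrix_inv Q ** Q = mat 1"
    using inv unfolding invertible_def matrix_inv_def by (rule someI_ex)
  then have "matrix_inv Q = K"
    by (metis QK matrix_mul_assoc matrix_mul_lid matrix_mul_rid)
  then have ch: "det (matrix_inv Q ** D - cscale \<mu> (mat 1)) = \<mu>^2 + 1" for \<mu>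
  proof -
    have "det (matrix_inv Q ** D - cscale \<mu> (mat 1)) = \<mu>^2 + of_real ((d*d)/\<Delta>)"
    proof -
      have dlc: "complex_of_real q11 * of_real q22 = of_real \<Delta> + of_real q12 * of_real q12"
        using dl by (metis add_diff_cancel diff_add_cancel of_real_add of_real_mult)
      have nzc: "complex_of_real \<Delta> \<noteq> 0" using nz' by simp
      show ?thesis
        unfolding \<open>matrix_inv Q = K\<close> K_def De mat1_mat2
        using nzc dlc by (simp add: det_mat2 field_simps power2_eq_square)
    qed
    then show ?thesis using dl2 nz' by simp
  qed
  have "{cmod \<mu> | \<mu>. det (matrix_inv Q ** D - cscale \<mu> (mat 1)) = 0} = {1}"
  proof (rule set_eqI, rule iffI)
    fix x assume "x \<in> {cmod \<mu> | \<mu>. det (matrix_inv Q ** D - cscale \<mu> (mat 1)) = 0}"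
    then obtain \<mu> where "x = cmod \<mu>" "\<mu>^2 + 1 = 0" using ch by auto
    then have "\<mu>^2 = -1" by (metis add_eq_0_iff equation_minus_iff)
    then have "cmod \<mu> ^2 = 1" by (metis norm_minus_cancel norm_one norm_power)
    then show "x \<in> {1}" using \<open>x = cmod \<mu>\<close> norm_ge_zero[of \<mu>] by (auto simp add: power2_eq_1_iff)
  next
    fix x assume "x \<in> {1::real}"
    then show "x \<in> {cmod \<mu> | \<mu>. det (matrix_inv Q ** D - cscale \<mu> (mat 1)) = 0}"
      using ch[of \<i>] by (auto intro!: exI[of _ \<i>])
  qed
  then show ?thesis by simp
qed


lemma cross_hB_hT: "cross3 (hB t th) (hT t B th) = (- (t/2) * sin (B*t/2)) *\<^sub>R n_2 t B th"
  by (simp add: cross3_simps hB_def hT_def n_2_def n_theta_def n_1_def power2_eq_square)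

theorem mainTheorem4:
  fixes t B \<theta> :: real and \<psi>0 :: cvec
  assumes "is_pure_state \<psi>0"
  shows "det (QFIM t B \<theta> \<psi>0) =
           complex_of_real (4 * t\<^sup>2 * (sin (B*t/2))\<^sup>2 * (n_2 t B \<theta> \<bullet> bloch \<psi>0)\<^sup>2)
       \<and> det (Uhlmann t B \<theta> \<psi>0) =
           complex_of_real (4 * t\<^sup>2 * (sin (B*t/2))\<^sup>2 * (n_2 t B \<theta> \<bullet> bloch \<psi>0)\<^sup>2)
       \<and> (t * sin (B*t/2) \<noteq> 0 \<longrightarrow>
            (Uhlmann t B \<theta> \<psi>0 = 0 \<longleftrightarrow> det (QFIM t B \<theta> \<psi>0) = 0))
       \<and> (invertible (QFIM t B \<theta> \<psi>0) \<longrightarrow> AI t B \<theta> \<psi>0 = 1)"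
proof -
  define r where "r = bloch \<psi>0"
  define a where "a = hB t \<theta>"
  define b where "b = hT t B \<theta>"
  define hv where "hv = (\<lambda>l::2. if l = 1 then a else b)"
  have genh: "gen t B \<theta> l = Pm (hv l)" for l
    using exhaust_2[of l] by (auto simp: hv_def a_def b_def gen1 gen2)
  have Qent: "QFIM t B \<theta> \<psi>0 $ l $ l' = of_real (4*(hv l \<bullet> hv l') - 4*(hv l \<bullet> r)*(hv l' \<bullet> r))" for l l'
    by (simp add: QFIM_def genh Pm_anti expect_scaleR expect_one[OF assms] expect_Pm r_def)
  have Dent: "Uhlmann t B \<theta> \<psi>0 $ l $ l' = of_real (4*(cross3 (hv l) (hv l') \<bullet> r))" for l l'
    by (simp add: Uhlmann_def genh Pm_comm expect_cscale expect_Pm r_def)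
  define q11 where "q11 = 4*(a \<bullet> a) - 4*(a \<bullet> r)*(a \<bullet> r)"
  define q12 where "q12 = 4*(a \<bullet> b) - 4*(a \<bullet> r)*(b \<bullet> r)"
  define q22 where "q22 = 4*(b \<bullet> b) - 4*(b \<bullet> r)*(b \<bullet> r)"
  define d where "d = 4*(cross3 a b \<bullet> r)"
  have Qe: "QFIM t B \<theta> \<psi>0 = mat2 (of_real q11) (of_real q12) (of_real q12) (of_real q22)"
    by (subst cmat_mat2) (simp add: Qent hv_def q11_def q12_def q22_def inner_commute)
  have De: "Uhlmann t B \<theta> \<psi>0 = mat2 0 (of_real d) (of_real (-d)) 0"
    by (subst cmat_mat2) (simp add: Dent hv_def d_def cross_refl cross_skew[of b a])
  have rr: "r \<bullet> r = 1" using bloch_norm[OF assms] by (simp add: r_def)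
  have dd: "q11*q22 - q12^2 = d^2"
  proof -
    have "q11*q22 - q12^2 = 16 * ((a\<bullet>a - (a\<bullet>r)^2) * (b\<bullet>b - (b\<bullet>r)^2) - (a\<bullet>b - (a\<bullet>r)*(b\<bullet>r))^2)"
      by (simp add: q11_def q12_def q22_def power2_eq_square algebra_simps)
    also have "\<dots> = d^2" using gram3[OF rr, of a b] by (simp add: d_def power2_eq_square)
    finally show ?thesis .
  qed
  have dval: "d^2 = 4 * t\<^sup>2 * (sin (B*t/2))\<^sup>2 * (n_2 t B \<theta> \<bullet> bloch \<psi>0)\<^sup>2"
    by (simp add: d_def a_def b_def cross_hB_hT r_def power2_eq_square algebra_simps)
  have detQ: "det (QFIM t B \<theta> \<psi>0) = of_real (d^2)"
    using dd by (simp add: Qe det_mat2 power2_eq_square flip: of_real_mult of_real_diff)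
  have detD: "det (Uhlmann t B \<theta> \<psi>0) = of_real (d^2)"
    by (simp add: De det_mat2 power2_eq_square)
  have p3: "Uhlmann t B \<theta> \<psi>0 = 0 \<longleftrightarrow> det (QFIM t B \<theta> \<psi>0) = 0"
    by (simp add: De detQ mat0_mat2)
  have p4: "invertible (QFIM t B \<theta> \<psi>0) \<longrightarrow> AI t B \<theta> \<psi>0 = 1"
    using AI_lemma[OF Qe De dd] by (simp add: AI_def)
  show ?thesis using detQ detD dval p3 p4 by simp
qed

end
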